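(* Let $X$ be a Banach lattice, $(e_n)$ a semi-normalized basic sequence in $X$ with closed span $E$ and biorthogonal functionals $e_n^*\in E^*$, and let $C>0$. The following are equivalent. (i) For all $x\in E$, all $m\in\mathbb{N}$ and all greedy orderings $\pi$ of $x$, $\|G^\vee_{\pi,m}(x)\|\le C\|x\|$. (ii) For all $x\in E$ and all $m\in\mathbb{N}$, $\|\mathcal{G}^\vee_m(x)\|\le C\|x\|$. (iii) For all $x\in E$ and all $m\in\mathbb{N}$ there exists a greedy ordering $\pi$ of $x$ with $\|G^\vee_{\pi,m}(x)\|\le C\|x\|$. (iv) $\|\mathcal{G}^\vee_{|\mathrm{supp}(x)|}(x)\|\le C\|x\|$ whenever $x\in E$ has finite support and $\mathcal{G}_{|\mathrm{supp}(x)|}(x)$ is a lattice strictly greedy sum of $x$. (v) $\|\mathcal{G}^\vee_{|\mathrm{supp}(x)|}(x)\|\le C\|x\|$ for all $x\in E$ of finite support. Furthermore, the least $C$ for which these estimates hold is $\sup_m\|\mathcal{G}^\vee_m\|$, where $\|\mathcal{G}^\vee_m\|=\sup\{\|\mathcal{G}^\vee_m(x)\|: x\in E,\ \|x\|=1\}$.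
   Context: $\mathrm{supp}(x)=\{n: e_n^*(x)\neq0\}$. A greedy ordering of $x\in E$ is an injective map $\pi:\mathbb{N}\to\mathbb{N}$ with $\mathrm{supp}(x)\subseteq\pi(\mathbb{N})$ and $(|e^*_{\pi(n)}(x)|)_n$ non-increasing. $G_{\pi,m}(x)=\sum_{n=1}^m e^*_{\pi(n)}(x)e_{\pi(n)}$ and $G^\vee_{\pi,m}(x)=\bigvee_{n=1}^m|G_{\pi,n}(x)|$. The natural greedy ordering $\rho$ of $x$ is the greedy ordering in which ties $|e^*_{\rho(j)}(x)|=|e^*_{\rho(k)}(x)|$ with $j<k$ satisfy $\rho(j)<\rho(k)$; $\mathcal{G}_m(x)=G_{\rho,m}(x)$ and $\mathcal{G}^\vee_m(x)=\bigvee_{n=1}^m|\mathcal{G}_n(x)|$. $G_{\pi,m}(x)$ is a lattice strictly greedy sum of $x$ of order $m$ if $|e^*_{\pi(i)}(x)|\ne|e^*_{\pi(j)}(x)|$ for all distinct $i,j\in\{1,\dots,m\}$ with $e^*_{\pi(i)}(x)\ne0$. *)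

theory Defs
  imports "HOL-Analysis.Analysis"
begin

definition labs :: "'a::{lattice, uminus} \<Rightarrow> 'a" where
  "labs x = sup x (- x)"

class banach_lattice = banach + ordered_real_vector + lattice +
  assumes lattice_norm: "sup x (- x) \<le> sup y (- y) \<Longrightarrow> norm x \<le> norm y"

definition closed_span :: "(nat \<Rightarrow> 'a::real_normed_vector) \<Rightarrow> 'a set" where
  "closed_span e = closure (span (range e))"

definition basic_sequence :: "(nat \<Rightarrow> 'a::real_normed_vector) \<Rightarrow> bool" where
  "basic_sequence e \<longleftrightarrow> (\<forall>x\<in>closed_span e. \<exists>!a. (\<lambda>n. a n *\<^sub>R e n) sums x)"

definition semi_normalized :: "(nat \<Rightarrow> 'a::real_normed_vector) \<Rightarrow> bool" where
  "semi_normalized e \<longleftrightarrow> (\<exists>c d. 0 < c \<and> (\<forall>n. c \<le> norm (e n) \<and> norm (e n) \<le> d))"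

definition coef :: "(nat \<Rightarrow> 'a::real_normed_vector) \<Rightarrow> nat \<Rightarrow> 'a \<Rightarrow> real" where
  "coef e n x = (THE a. (\<lambda>k. a k *\<^sub>R e k) sums x) n"

definition supp :: "(nat \<Rightarrow> 'a::real_normed_vector) \<Rightarrow> 'a \<Rightarrow> nat set" where
  "supp e x = {n. coef e n x \<noteq> 0}"

definition greedy_ordering :: "(nat \<Rightarrow> 'a::real_normed_vector) \<Rightarrow> (nat \<Rightarrow> nat) \<Rightarrow> 'a \<Rightarrow> bool" where
  "greedy_ordering e \<pi> x \<longleftrightarrow> inj \<pi> \<and> supp e x \<subseteq> range \<pi> \<and>
     (\<forall>n. \<bar>coef e (\<pi> (Suc n)) x\<bar> \<le> \<bar>coef e (\<pi> n) x\<bar>)"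

definition natural_greedy_ordering :: "(nat \<Rightarrow> 'a::real_normed_vector) \<Rightarrow> (nat \<Rightarrow> nat) \<Rightarrow> 'a \<Rightarrow> bool" where
  "natural_greedy_ordering e \<rho> x \<longleftrightarrow> greedy_ordering e \<rho> x \<and>
     (\<forall>j k. j < k \<and> \<bar>coef e (\<rho> j) x\<bar> = \<bar>coef e (\<rho> k) x\<bar> \<longrightarrow> \<rho> j < \<rho> k)"

text \<open>Greedy sums (0-indexed: G e pi m x uses pi 0, ..., pi (m-1)).\<close>
definition G :: "(nat \<Rightarrow> 'a::real_normed_vector) \<Rightarrow> (nat \<Rightarrow> nat) \<Rightarrow> nat \<Rightarrow> 'a \<Rightarrow> 'a" where
  "G e \<pi> m x = (\<Sum>n<m. coef e (\<pi> n) x *\<^sub>R e (\<pi> n))"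

primrec Gvee :: "(nat \<Rightarrow> 'a::banach_lattice) \<Rightarrow> (nat \<Rightarrow> nat) \<Rightarrow> nat \<Rightarrow> 'a \<Rightarrow> 'a" where
  "Gvee e \<pi> 0 x = 0"
| "Gvee e \<pi> (Suc m) x = sup (Gvee e \<pi> m x) (labs (G e \<pi> (Suc m) x))"

definition natord :: "(nat \<Rightarrow> 'a::real_normed_vector) \<Rightarrow> 'a \<Rightarrow> nat \<Rightarrow> nat" where
  "natord e x = (SOME \<rho>. natural_greedy_ordering e \<rho> x)"

definition NG :: "(nat \<Rightarrow> 'a::real_normed_vector) \<Rightarrow> nat \<Rightarrow> 'a \<Rightarrow> 'a" where
  "NG e m x = G e (natord e x) m x"

definition NGvee :: "(nat \<Rightarrow> 'a::banach_lattice) \<Rightarrow> nat \<Rightarrow> 'a \<Rightarrow> 'a" where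
  "NGvee e m x = Gvee e (natord e x) m x"

definition lattice_strictly_greedy :: "(nat \<Rightarrow> 'a::real_normed_vector) \<Rightarrow> (nat \<Rightarrow> nat) \<Rightarrow> nat \<Rightarrow> 'a \<Rightarrow> bool" where
  "lattice_strictly_greedy e \<pi> m x \<longleftrightarrow>
     (\<forall>i<m. \<forall>j<m. i \<noteq> j \<and> coef e (\<pi> i) x \<noteq> 0 \<longrightarrow> \<bar>coef e (\<pi> i) x\<bar> \<noteq> \<bar>coef e (\<pi> j) x\<bar>)"

definition NGvee_norm :: "(nat \<Rightarrow> 'a::banach_lattice) \<Rightarrow> nat \<Rightarrow> ereal" where
  "NGvee_norm e m = (SUP x\<in>{x\<in>closed_span e. norm x = 1}. ereal (norm (NGvee e m x)))"

end

theory Submission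
  imports Defs
begin


definition gr :: "(nat \<Rightarrow> real) \<Rightarrow> (nat \<Rightarrow> nat) \<Rightarrow> bool" where
  "gr a \<pi> \<longleftrightarrow> inj \<pi> \<and> {n. a n \<noteq> 0} \<subseteq> range \<pi> \<and> (\<forall>n. \<bar>a (\<pi> (Suc n))\<bar> \<le> \<bar>a (\<pi> n)\<bar>)"

definition natgr :: "(nat \<Rightarrow> real) \<Rightarrow> (nat \<Rightarrow> nat) \<Rightarrow> bool" where
  "natgr a \<rho> \<longleftrightarrow> gr a \<rho> \<and> (\<forall>j k. j < k \<and> \<bar>a (\<rho> j)\<bar> = \<bar>a (\<rho> k)\<bar> \<longrightarrow> \<rho> j < \<rho> k)"

lemma gr_antimono:
  assumes "gr a \<pi>" "i \<le> l" shows "\<bar>a (\<pi> l)\<bar> \<le> \<bar>a (\<pi> i)\<bar>"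
proof -
  have "\<forall>n. \<bar>a (\<pi> (Suc n))\<bar> \<le> \<bar>a (\<pi> n)\<bar>" using assms(1) unfolding gr_def by blast
  then show ?thesis using lift_Suc_antimono_le[of "\<lambda>n. \<bar>a (\<pi> n)\<bar>"] assms(2) by blast
qed

lemma gr_first_zero:
  assumes "gr a \<pi>"
  shows "\<exists>p\<le>m. (\<forall>j<p. a (\<pi> j) \<noteq> 0) \<and>
     (p < m \<longrightarrow> (\<forall>l\<ge>p. a (\<pi> l) = 0) \<and> {n. a n \<noteq> 0} \<subseteq> \<pi> ` {..<p})"
proof (cases "\<forall>j<m. a (\<pi> j) \<noteq> 0")
  case True
  then show ?thesis by (intro exI[of _ m]) auto
next
  case False
  define p where "p = (LEAST j. a (\<pi> j) = 0)"
  from False obtain j0 where j0: "j0 < m" "a (\<pi> j0) = 0" by auto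
  have pz: "a (\<pi> p) = 0" unfolding p_def by (rule LeastI[of _ j0]) (use j0 in auto)
  have "p \<le> j0" unfolding p_def by (rule Least_le) (use j0 in auto)
  hence pm: "p < m" using j0 by auto
  have bel: "\<forall>j<p. a (\<pi> j) \<noteq> 0" unfolding p_def using not_less_Least by blast
  have tail: "\<forall>l\<ge>p. a (\<pi> l) = 0"
  proof (intro allI impI)
    fix l assume "p \<le> l"
    then have "\<bar>a (\<pi> l)\<bar> \<le> \<bar>a (\<pi> p)\<bar>" using gr_antimono[OF assms] by blast
    then show "a (\<pi> l) = 0" using pz by simp
  qed
  have "{n. a n \<noteq> 0} \<subseteq> \<pi> ` {..<p}"
  proof
    fix n assume "n \<in> {n. a n \<noteq> 0}"
    then obtain q where q: "n = \<pi> q" "a n \<noteq> 0" using assms unfolding gr_def by auto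
    hence "q < p" using tail by (metis not_less)
    thus "n \<in> \<pi> ` {..<p}" using q by auto
  qed
  then show ?thesis using pm bel tail by (intro exI[of _ p]) auto
qed

lemma top_unique:
  fixes b :: "nat \<Rightarrow> real"
  assumes g: "gr b \<sigma>" and injp: "inj \<pi>"
    and nz: "\<forall>j<p. b (\<pi> j) \<noteq> 0"
    and strict: "\<forall>i j. i < j \<longrightarrow> j < p \<longrightarrow> \<bar>b (\<pi> j)\<bar> < \<bar>b (\<pi> i)\<bar>"
    and out: "\<forall>n j. j < p \<longrightarrow> n \<notin> \<pi> ` {..<p} \<longrightarrow> \<bar>b n\<bar> < \<bar>b (\<pi> j)\<bar>"
  shows "\<forall>j<p. \<sigma> j = \<pi> j"
proof (intro allI impI)
  fix j assume "j < p"
  then show "\<sigma> j = \<pi> j"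
  proof (induction j rule: less_induct)
    case (less j)
    have injs: "inj \<sigma>" using g unfolding gr_def by auto
    have "\<pi> j \<in> range \<sigma>" using g nz less.prems unfolding gr_def by auto
    then obtain l where l: "\<pi> j = \<sigma> l" by auto
    have "\<not> l < j"
    proof
      assume "l < j"
      hence "\<sigma> l = \<pi> l" using less by auto
      hence "\<pi> l = \<pi> j" using l by simp
      thus False using injp \<open>l < j\<close> by (auto dest: injD)
    qed
    hence ge: "\<bar>b (\<pi> j)\<bar> \<le> \<bar>b (\<sigma> j)\<bar>" using gr_antimono[OF g, of j l] l by auto
    show ?case
    proof (cases "\<sigma> j \<in> \<pi> ` {..<p}")
      case True
      then obtain q where q: "q < p" "\<sigma> j = \<pi> q" by auto
      consider "q < j" | "q = j" | "j < q" by arith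
      then show ?thesis
      proof cases
        case 1
        hence "\<sigma> q = \<pi> q" using less q by auto
        hence "\<sigma> q = \<sigma> j" using q by simp
        then show ?thesis using injs 1 by (auto dest: injD)
      next
        case 2 then show ?thesis using q by simp
      next
        case 3
        then have "\<bar>b (\<pi> q)\<bar> < \<bar>b (\<pi> j)\<bar>" using strict q by auto
        then show ?thesis using ge q by simp
      qed
    next
      case False
      then have "\<bar>b (\<sigma> j)\<bar> < \<bar>b (\<pi> j)\<bar>" using out less.prems by auto
      then show ?thesis using ge by simp
    qed
  qed
qed

lemma nat_prefix:
  fixes a b :: "nat \<Rightarrow> real"
  assumes ga: "natgr a \<rho>" and gb: "natgr b \<sigma>"
    and bsub: "\<forall>n. b n \<noteq> 0 \<longrightarrow> b n = a n"
    and pre: "\<forall>j<p. a (\<rho> j) \<noteq> 0 \<and> b (\<rho> j) = a (\<rho> j)"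
  shows "\<forall>j<p. \<sigma> j = \<rho> j"
proof (intro allI impI)
  fix j assume "j < p"
  then show "\<sigma> j = \<rho> j"
  proof (induction j rule: less_induct)
    case (less j)
    have gra: "gr a \<rho>" and grb: "gr b \<sigma>" using ga gb unfolding natgr_def by auto
    have injs: "inj \<sigma>" and injr: "inj \<rho>" using gra grb unfolding gr_def by auto
    have bj: "b (\<rho> j) = a (\<rho> j)" "a (\<rho> j) \<noteq> 0" using pre less.prems by auto
    have "\<rho> j \<in> range \<sigma>" using grb bj unfolding gr_def by auto
    then obtain l where l: "\<rho> j = \<sigma> l" by auto
    show ?case
    proof (rule ccontr)
      assume ne: "\<sigma> j \<noteq> \<rho> j"
      have "\<not> l < j"
      proof
        assume "l < j"
        hence "\<sigma> l = \<rho> l" using less by auto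
        hence "\<rho> l = \<rho> j" using l by simp
        thus False using injr \<open>l < j\<close> by (auto dest: injD)
      qed
      moreover have "l \<noteq> j" using ne l by auto
      ultimately have lj: "j < l" by auto
      have ge: "\<bar>b (\<sigma> l)\<bar> \<le> \<bar>b (\<sigma> j)\<bar>" using gr_antimono[OF grb, of j l] lj by auto
      hence ge2: "\<bar>a (\<rho> j)\<bar> \<le> \<bar>b (\<sigma> j)\<bar>" using l bj by simp
      hence bsj: "b (\<sigma> j) \<noteq> 0" using bj by auto
      hence asj: "a (\<sigma> j) = b (\<sigma> j)" using bsub by metis
      hence "\<sigma> j \<in> range \<rho>" using gra bsj unfolding gr_def by auto
      then obtain q where q: "\<sigma> j = \<rho> q" by auto
      have "q \<noteq> j" using q ne by auto
      moreover have "\<not> q < j"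
      proof
        assume "q < j"
        hence "\<sigma> q = \<rho> q" using less by auto
        hence "\<sigma> q = \<sigma> j" using q by simp
        thus False using injs \<open>q < j\<close> by (auto dest: injD)
      qed
      ultimately have jq: "j < q" by auto
      have "\<bar>a (\<rho> q)\<bar> \<le> \<bar>a (\<rho> j)\<bar>" using gr_antimono[OF gra, of j q] jq by auto
      hence eq: "\<bar>a (\<rho> j)\<bar> = \<bar>a (\<rho> q)\<bar>" using ge2 asj q by auto
      hence "\<rho> j < \<rho> q" using ga jq unfolding natgr_def by blast
      moreover have "\<bar>b (\<sigma> j)\<bar> = \<bar>b (\<sigma> l)\<bar>" using eq asj q l bj by simp
      hence "\<sigma> j < \<sigma> l" using gb lj unfolding natgr_def by blast
      ultimately show False using q l by simp
    qed
  qed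
qed

lemma finite_prefix:
  assumes g: "gr a \<pi>" and fin: "finite {n. a n \<noteq> 0}"
  shows "\<pi> i \<in> {n. a n \<noteq> 0} \<longleftrightarrow> i < card {n. a n \<noteq> 0}"
proof -
  let ?S = "{n. a n \<noteq> 0}"
  define P where "P = {i. \<pi> i \<in> ?S}"
  have inj: "inj \<pi>" and sub: "?S \<subseteq> range \<pi>" using g unfolding gr_def by auto
  have bij: "bij_betw \<pi> P ?S"
    unfolding bij_betw_def P_def using inj sub by (auto simp: inj_on_def intro: injD[OF inj])
  hence cP: "card P = card ?S" by (rule bij_betw_same_card)
  have finP: "finite P" using bij fin bij_betw_finite by blast
  have down: "i \<in> P" if "l \<in> P" "i \<le> l" for i l
    using that gr_antimono[OF g, of i l] unfolding P_def by auto
  have "P \<subseteq> {..<card ?S}"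
  proof
    fix i assume "i \<in> P"
    hence "{..i} \<subseteq> P" using down by auto
    hence "card {..i} \<le> card P" using finP by (rule card_mono[rotated])
    thus "i \<in> {..<card ?S}" using cP by simp
  qed
  hence "P = {..<card ?S}" using cP by (intro card_subset_eq) auto
  thus ?thesis unfolding P_def by blast
qed

lemma exists_natgr:
  fixes a :: "nat \<Rightarrow> real"
  assumes fin: "\<And>\<epsilon>. \<epsilon> > 0 \<Longrightarrow> finite {k. \<epsilon> \<le> \<bar>a k\<bar>}"
  shows "\<exists>\<rho>. natgr a \<rho>"
proof -
  define prec where "prec k j \<longleftrightarrow> \<bar>a j\<bar> < \<bar>a k\<bar> \<or> (\<bar>a j\<bar> = \<bar>a k\<bar> \<and> k < j)" for k j
  have ex: "\<exists>k. k \<notin> A \<and> (\<forall>j. j \<notin> A \<longrightarrow> j \<noteq> k \<longrightarrow> prec k j)" if "finite A" for A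
  proof (cases "\<exists>t. t \<notin> A \<and> a t \<noteq> 0")
    case True
    then obtain t where t: "t \<notin> A" "a t \<noteq> 0" by auto
    define F where "F = {k. k \<notin> A \<and> \<bar>a t\<bar> \<le> \<bar>a k\<bar>}"
    have finF: "finite F" unfolding F_def
      by (rule finite_subset[OF _ fin[of "\<bar>a t\<bar>"]]) (use t in auto)
    have tF: "t \<in> F" unfolding F_def using t by auto
    define Mx where "Mx = Max ((\<lambda>k. \<bar>a k\<bar>) ` F)"
    have Mx_ge: "\<bar>a j\<bar> \<le> Mx" if "j \<in> F" for j
      unfolding Mx_def using finF that by auto
    have "Mx \<in> (\<lambda>k. \<bar>a k\<bar>) ` F" unfolding Mx_def using finF tF by (intro Max_in) auto
    then obtain k0 where k0: "k0 \<in> F" "\<bar>a k0\<bar> = Mx" by auto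
    define k where "k = (LEAST k. k \<in> F \<and> \<bar>a k\<bar> = Mx)"
    have kP: "k \<in> F \<and> \<bar>a k\<bar> = Mx" unfolding k_def by (rule LeastI[of _ k0]) (use k0 in auto)
    have kmin: "k \<le> j" if "j \<in> F" "\<bar>a j\<bar> = Mx" for j
      unfolding k_def by (rule Least_le) (use that in auto)
    show ?thesis
    proof (intro exI[of _ k] conjI allI impI)
      show "k \<notin> A" using kP unfolding F_def by auto
      fix j assume j: "j \<notin> A" "j \<noteq> k"
      show "prec k j"
      proof (cases "j \<in> F")
        case True
        then show ?thesis using Mx_ge[OF True] kmin[OF True] kP j unfolding prec_def
          by (cases "\<bar>a j\<bar> = Mx") auto
      next
        case False
        hence "\<bar>a j\<bar> < \<bar>a t\<bar>" using j unfolding F_def by auto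
        moreover have "\<bar>a t\<bar> \<le> Mx" using Mx_ge[OF tF] .
        ultimately show ?thesis using kP unfolding prec_def by auto
      qed
    qed
  next
    case False
    have "\<exists>t. t \<notin> A" using that by (metis ex_new_if_finite infinite_UNIV_nat)
    then obtain t where "t \<notin> A" by auto
    define k where "k = (LEAST k. k \<notin> A)"
    have kA: "k \<notin> A" unfolding k_def by (rule LeastI[of _ t]) fact
    have kmin: "k \<le> j" if "j \<notin> A" for j unfolding k_def by (rule Least_le) fact
    show ?thesis
      using False kA kmin unfolding prec_def by (intro exI[of _ k]) (auto simp: le_less)
  qed
  define sel where "sel A = (SOME k. k \<notin> A \<and> (\<forall>j. j \<notin> A \<longrightarrow> j \<noteq> k \<longrightarrow> prec k j))" for A
  have sel: "sel A \<notin> A \<and> (\<forall>j. j \<notin> A \<longrightarrow> j \<noteq> sel A \<longrightarrow> prec (sel A) j)" if "finite A" for A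
    unfolding sel_def by (rule someI_ex) (rule ex[OF that])
  define R where "R = rec_nat {} (\<lambda>n S. insert (sel S) S)"
  define \<rho> where "\<rho> n = sel (R n)" for n
  have R0: "R 0 = {}" and RS: "R (Suc n) = insert (\<rho> n) (R n)" for n
    unfolding R_def \<rho>_def by simp_all
  have Rim: "R n = \<rho> ` {..<n}" for n
    by (induction n) (auto simp: R0 RS lessThan_Suc)
  have selR: "\<rho> n \<notin> R n \<and> (\<forall>j. j \<notin> R n \<longrightarrow> j \<noteq> \<rho> n \<longrightarrow> prec (\<rho> n) j)" for n
    unfolding \<rho>_def by (rule sel) (simp add: Rim)
  have precl: "prec (\<rho> i) (\<rho> l)" "\<rho> i \<noteq> \<rho> l" if "i < l" for i l
  proof -
    have "\<rho> l \<notin> R l" using selR by auto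
    moreover have "\<rho> i \<in> R l" using that by (simp add: Rim)
    ultimately show ne: "\<rho> i \<noteq> \<rho> l" by auto
    have "\<rho> l \<notin> R i" using \<open>\<rho> l \<notin> R l\<close> that by (auto simp: Rim)
    then show "prec (\<rho> i) (\<rho> l)" using selR[of i] ne by auto
  qed
  have inj: "inj \<rho>"
  proof (rule injI)
    fix i l assume "\<rho> i = \<rho> l"
    then show "i = l" using precl by (metis linorder_neqE_nat)
  qed
  have supp: "{n. a n \<noteq> 0} \<subseteq> range \<rho>"
  proof
    fix s assume "s \<in> {n. a n \<noteq> 0}"
    hence s: "a s \<noteq> 0" by auto
    show "s \<in> range \<rho>"
    proof (rule ccontr)
      assume ns: "s \<notin> range \<rho>"
      have pn: "prec (\<rho> n) s" for n
      proof -
        have "s \<notin> R n" using ns by (auto simp: Rim)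
        moreover have "s \<noteq> \<rho> n" using ns by auto
        ultimately show ?thesis using selR[of n] by auto
      qed
      have "\<bar>a s\<bar> \<le> \<bar>a (\<rho> n)\<bar>" for n using pn[of n] unfolding prec_def by auto
      hence "range \<rho> \<subseteq> {k. \<bar>a s\<bar> \<le> \<bar>a k\<bar>}" by auto
      hence "finite (range \<rho>)" using fin[of "\<bar>a s\<bar>"] s by (auto intro: finite_subset)
      hence "finite (UNIV :: nat set)" using inj finite_imageD by blast
      thus False by simp
    qed
  qed
  have mono: "\<forall>n. \<bar>a (\<rho> (Suc n))\<bar> \<le> \<bar>a (\<rho> n)\<bar>"
  proof
    fix n show "\<bar>a (\<rho> (Suc n))\<bar> \<le> \<bar>a (\<rho> n)\<bar>"
      using precl(1)[of n "Suc n"] unfolding prec_def by auto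
  qed
  have "gr a \<rho>" unfolding gr_def using inj supp mono by blast
  moreover have "\<forall>j k. j < k \<and> \<bar>a (\<rho> j)\<bar> = \<bar>a (\<rho> k)\<bar> \<longrightarrow> \<rho> j < \<rho> k"
  proof (intro allI impI)
    fix j k assume "j < k \<and> \<bar>a (\<rho> j)\<bar> = \<bar>a (\<rho> k)\<bar>"
    then show "\<rho> j < \<rho> k" using precl(1)[of j k] unfolding prec_def by auto
  qed
  ultimately show ?thesis unfolding natgr_def by blast
qed




lemma lnorm: "labs x \<le> labs y \<Longrightarrow> norm (x::'a::banach_lattice) \<le> norm y"
  unfolding labs_def by (rule lattice_norm)

lemma labs_ge: "(x::'a::banach_lattice) \<le> labs x" "- x \<le> labs x"
  unfolding labs_def by simp_all

lemma labs_neg: "labs (- (x::'a::banach_lattice)) = labs x"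
  unfolding labs_def by (simp add: sup_commute)

lemma labs_nonneg: "0 \<le> labs (x::'a::banach_lattice)"
proof -
  have "x + (- x) \<le> labs x + labs x" by (rule add_mono) (rule labs_ge)+
  hence "0 \<le> 2 *\<^sub>R labs x" by (simp add: scaleR_2)
  hence "0 \<le> (1/2::real) *\<^sub>R (2 *\<^sub>R labs x)" by (rule scaleR_nonneg_nonneg[rotated]) simp
  thus ?thesis by simp
qed

lemma labs_pos: "0 \<le> (x::'a::banach_lattice) \<Longrightarrow> labs x = x"
  unfolding labs_def by (rule sup_absorb1) (meson neg_le_0_iff_le order_trans)

lemma labs_labs: "labs (labs (x::'a::banach_lattice)) = labs x"
  by (rule labs_pos[OF labs_nonneg])

lemma norm_labs: "norm (labs (x::'a::banach_lattice)) = norm x"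
  by (intro antisym lnorm) (simp_all add: labs_labs)

lemma norm_mono_pos: "0 \<le> (u::'a::banach_lattice) \<Longrightarrow> u \<le> v \<Longrightarrow> norm u \<le> norm v"
  by (rule lnorm) (simp add: labs_pos)

lemma labs_le: "(x::'a::banach_lattice) \<le> s \<Longrightarrow> - x \<le> s \<Longrightarrow> labs x \<le> s"
  unfolding labs_def by simp

lemma labs_diff_aux: "labs (u::'a::banach_lattice) \<le> labs (u - v) + labs v"
proof (rule labs_le)
  have "(u - v) + v \<le> labs (u - v) + labs v" by (rule add_mono) (rule labs_ge)+
  thus "u \<le> labs (u - v) + labs v" by simp
  have "- (u - v) + - v \<le> labs (u - v) + labs v" by (rule add_mono) (rule labs_ge)+
  thus "- u \<le> labs (u - v) + labs v" by simp
qed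

lemma labs_diff: "labs (labs u - labs v) \<le> labs ((u::'a::banach_lattice) - v)"
proof (rule labs_le)
  show "labs u - labs v \<le> labs (u - v)" using labs_diff_aux[of u v] by (simp add: diff_le_eq)
  have "labs v \<le> labs (v - u) + labs u" by (rule labs_diff_aux)
  also have "labs (v - u) = labs (u - v)" using labs_neg[of "u - v"] by simp
  finally show "- (labs u - labs v) \<le> labs (u - v)" by (simp add: diff_le_eq)
qed

lemma norm_labs_diff: "norm (labs u - labs v) \<le> norm ((u::'a::banach_lattice) - v)"
  by (rule lnorm[OF labs_diff])

lemma sup_diff_aux:
  "sup a b \<le> labs ((a::'a::banach_lattice) - c) + labs (b - d) + sup c d"
proof (rule sup_least)
  have "(a - c) + 0 + c \<le> labs (a - c) + labs (b - d) + sup c d"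
    by (intro add_mono labs_ge labs_nonneg sup_ge1)
  thus "a \<le> labs (a - c) + labs (b - d) + sup c d" by simp
  have "0 + (b - d) + d \<le> labs (a - c) + labs (b - d) + sup c d"
    by (intro add_mono labs_ge labs_nonneg sup_ge2)
  thus "b \<le> labs (a - c) + labs (b - d) + sup c d" by simp
qed

lemma sup_diff: "labs (sup a b - sup c d) \<le> labs ((a::'a::banach_lattice) - c) + labs (b - d)"
proof (rule labs_le)
  show "sup a b - sup c d \<le> labs (a - c) + labs (b - d)"
    using sup_diff_aux[of a b c d] by (simp add: diff_le_eq)
  have "sup c d \<le> labs (c - a) + labs (d - b) + sup a b" by (rule sup_diff_aux)
  also have "labs (c - a) = labs (a - c)" using labs_neg[of "a - c"] by simp
  also have "labs (d - b) = labs (b - d)" using labs_neg[of "b - d"] by simp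
  finally show "- (sup a b - sup c d) \<le> labs (a - c) + labs (b - d)" by (simp add: diff_le_eq)
qed

lemma norm_sup_diff:
  "norm (sup a b - sup c d) \<le> norm ((a::'a::banach_lattice) - c) + norm (b - d)"
proof -
  have s0: "0 \<le> labs (a - c) + labs (b - d)" by (intro add_nonneg_nonneg labs_nonneg)
  have "norm (sup a b - sup c d) \<le> norm (labs (a - c) + labs (b - d))"
    by (rule lnorm) (simp add: labs_pos[OF s0] sup_diff)
  also have "\<dots> \<le> norm (labs (a - c)) + norm (labs (b - d))" by (rule norm_triangle_ineq)
  finally show ?thesis by (simp add: norm_labs)
qed

lemma sup_scale: "0 \<le> c \<Longrightarrow> sup (c *\<^sub>R a) (c *\<^sub>R b) = c *\<^sub>R sup a (b::'a::banach_lattice)"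
proof (cases "c = 0")
  case True then show ?thesis by simp
next
  case False
  assume c: "0 \<le> c"
  hence cp: "0 < c" using False by simp
  show ?thesis
  proof (rule antisym)
    show "sup (c *\<^sub>R a) (c *\<^sub>R b) \<le> c *\<^sub>R sup a b"
      by (intro sup_least scaleR_left_mono c sup_ge1 sup_ge2)
    have "sup a b \<le> (1/c) *\<^sub>R sup (c *\<^sub>R a) (c *\<^sub>R b)"
    proof (rule sup_least)
      have "(1/c) *\<^sub>R (c *\<^sub>R a) \<le> (1/c) *\<^sub>R sup (c *\<^sub>R a) (c *\<^sub>R b)"
        by (intro scaleR_left_mono sup_ge1) (use cp in simp)
      thus "a \<le> (1/c) *\<^sub>R sup (c *\<^sub>R a) (c *\<^sub>R b)" using cp by simp
      have "(1/c) *\<^sub>R (c *\<^sub>R b) \<le> (1/c) *\<^sub>R sup (c *\<^sub>R a) (c *\<^sub>R b)"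
        by (intro scaleR_left_mono sup_ge2) (use cp in simp)
      thus "b \<le> (1/c) *\<^sub>R sup (c *\<^sub>R a) (c *\<^sub>R b)" using cp by simp
    qed
    hence "c *\<^sub>R sup a b \<le> c *\<^sub>R ((1/c) *\<^sub>R sup (c *\<^sub>R a) (c *\<^sub>R b))"
      by (rule scaleR_left_mono) (use c in simp)
    thus "c *\<^sub>R sup a b \<le> sup (c *\<^sub>R a) (c *\<^sub>R b)" using cp by simp
  qed
qed

lemma labs_scale: "labs (c *\<^sub>R (v::'a::banach_lattice)) = \<bar>c\<bar> *\<^sub>R labs v"
proof (cases "0 \<le> c")
  case True
  then show ?thesis unfolding labs_def
    using sup_scale[OF True, of v "- v"] by simp
next
  case False
  hence "c *\<^sub>R v = \<bar>c\<bar> *\<^sub>R (- v)" "- (c *\<^sub>R v) = \<bar>c\<bar> *\<^sub>R v" by simp_all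
  then show ?thesis unfolding labs_def
    using sup_scale[of "\<bar>c\<bar>" "- v" v] by (simp add: sup_commute)
qed

lemma labs_zero: "labs (0::'a::banach_lattice) = 0"
  unfolding labs_def by simp

lemma Gvee_nonneg: "0 \<le> Gvee e \<pi> m x"
  by (induction m) (auto intro: le_supI1)

lemma Gvee_mono: "m \<le> m' \<Longrightarrow> Gvee e \<pi> m x \<le> Gvee e \<pi> m' x"
  by (rule lift_Suc_mono_le[of "\<lambda>m. Gvee e \<pi> m x"]) auto

lemma norm_Gvee_mono: "m \<le> m' \<Longrightarrow> norm (Gvee e \<pi> m x) \<le> norm (Gvee e \<pi> m' x)"
  by (intro norm_mono_pos Gvee_nonneg Gvee_mono)

lemma Gvee_diff:
  "norm (Gvee e \<pi> m x - Gvee e \<sigma> m y) \<le> (\<Sum>n<m. norm (G e \<pi> (Suc n) x - G e \<sigma> (Suc n) y))"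
proof (induction m)
  case 0 then show ?case by simp
next
  case (Suc m)
  have "norm (Gvee e \<pi> (Suc m) x - Gvee e \<sigma> (Suc m) y)
     \<le> norm (Gvee e \<pi> m x - Gvee e \<sigma> m y) + norm (labs (G e \<pi> (Suc m) x) - labs (G e \<sigma> (Suc m) y))"
    by (simp add: norm_sup_diff)
  also have "\<dots> \<le> (\<Sum>n<m. norm (G e \<pi> (Suc n) x - G e \<sigma> (Suc n) y)) + norm (G e \<pi> (Suc m) x - G e \<sigma> (Suc m) y)"
    by (intro add_mono Suc.IH norm_labs_diff)
  finally show ?case by simp
qed

lemma Gvee_cong:
  "(\<And>n. n \<le> m \<Longrightarrow> G e \<pi> n x = G e' \<sigma> n y) \<Longrightarrow> Gvee e \<pi> m x = Gvee e' \<sigma> m y"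
  by (induction m) auto

lemma labs_G_le: "labs (G e \<pi> k x) \<le> Gvee e \<pi> k x"
  by (cases k) (auto simp: G_def labs_zero)

lemma Gvee_const:
  assumes "\<And>n. k \<le> n \<Longrightarrow> G e \<pi> n x = G e \<pi> k x" and "k \<le> m"
  shows "Gvee e \<pi> m x = Gvee e \<pi> k x"
  using assms(2)
proof (induction m rule: dec_induct)
  case base then show ?case by simp
next
  case (step n)
  have "Gvee e \<pi> (Suc n) x = sup (Gvee e \<pi> k x) (labs (G e \<pi> k x))"
    using step assms(1)[of "Suc n"] by simp
  also have "\<dots> = Gvee e \<pi> k x" by (rule sup_absorb1[OF labs_G_le])
  finally show ?case .
qed

lemma Gvee_scale:
  assumes "\<And>n. G e \<pi> n y = c *\<^sub>R G e \<pi> n x"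
  shows "Gvee e \<pi> m y = \<bar>c\<bar> *\<^sub>R Gvee e \<pi> m x"
proof (induction m)
  case 0 then show ?case by simp
next
  case (Suc m)
  then show ?case using assms by (simp add: labs_scale sup_scale)
qed

lemma eps_le:
  fixes A B K :: real
  assumes "\<And>t. t > 0 \<Longrightarrow> A \<le> B + t * K"
  shows "A \<le> B"
proof (rule field_le_epsilon)
  fix \<epsilon> :: real assume ep: "0 < \<epsilon>"
  define t where "t = \<epsilon> / (\<bar>K\<bar> + 1)"
  have tp: "t > 0" unfolding t_def using ep by (simp add: add_pos_nonneg)
  have "t * K \<le> t * \<bar>K\<bar>" using tp by (simp add: mult_left_mono)
  also have "\<dots> \<le> t * (\<bar>K\<bar> + 1)" using tp by simp
  also have "\<dots> = \<epsilon>" unfolding t_def by simp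
  finally show "A \<le> B + \<epsilon>" using assms[OF tp] by simp
qed



lemma greedy_iff: "greedy_ordering e \<pi> x \<longleftrightarrow> gr (\<lambda>n. coef e n x) \<pi>"
  unfolding greedy_ordering_def gr_def supp_def by simp

lemma natural_iff: "natural_greedy_ordering e \<rho> x \<longleftrightarrow> natgr (\<lambda>n. coef e n x) \<rho>"
  unfolding natural_greedy_ordering_def natgr_def greedy_iff by simp

lemma natgr_gr: "natgr a \<rho> \<Longrightarrow> gr a \<rho>"
  unfolding natgr_def by simp

lemma natgr_scale:
  assumes "c \<noteq> 0" shows "natgr (\<lambda>n. c * a n) = natgr a"
proof -
  have p: "\<bar>c\<bar> > 0" using assms by simp
  show ?thesis
    unfolding natgr_def gr_def fun_eq_iff
    using assms by (simp add: abs_mult mult_le_cancel_left_pos[OF p])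
qed

locale bseq =
  fixes e :: "nat \<Rightarrow> 'a::banach_lattice"
  assumes bs: "basic_sequence e" and sn: "semi_normalized e"
begin

lemma sums_in_E:
  assumes "(\<lambda>n. b n *\<^sub>R e n) sums x" shows "x \<in> closed_span e"
proof -
  have l: "(\<lambda>N. \<Sum>i<N. b i *\<^sub>R e i) \<longlonglongrightarrow> x" using assms unfolding sums_def .
  have s: "\<forall>N. (\<Sum>i<N. b i *\<^sub>R e i) \<in> span (range e)"
    by (intro allI span_sum span_scale span_base) auto
  show ?thesis unfolding closed_span_def closure_sequential
    by (rule exI[of _ "\<lambda>N. \<Sum>i<N. b i *\<^sub>R e i"]) (use l s in blast)
qed

lemma coef_eq:
  assumes "(\<lambda>n. b n *\<^sub>R e n) sums x" shows "coef e n x = b n"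
proof -
  have x: "x \<in> closed_span e" by (rule sums_in_E[OF assms])
  have ex: "\<exists>!a. (\<lambda>k. a k *\<^sub>R e k) sums x" using bs x unfolding basic_sequence_def by blast
  have "(THE a. (\<lambda>k. a k *\<^sub>R e k) sums x) = b" by (rule the1_equality[where P="\<lambda>a. (\<lambda>k. a k *\<^sub>R e k) sums x", OF ex assms])
  thus ?thesis unfolding coef_def by simp
qed

lemma coef_sums:
  assumes "x \<in> closed_span e" shows "(\<lambda>n. coef e n x *\<^sub>R e n) sums x"
proof -
  have "\<exists>!a. (\<lambda>n. a n *\<^sub>R e n) sums x" using bs assms unfolding basic_sequence_def by blast
  hence "(\<lambda>n. (THE a. (\<lambda>k. a k *\<^sub>R e k) sums x) n *\<^sub>R e n) sums x" by (rule theI')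
  thus ?thesis unfolding coef_def .
qed

lemma E_add: "x \<in> closed_span e \<Longrightarrow> y \<in> closed_span e \<Longrightarrow> x + y \<in> closed_span e"
  using sums_add[OF coef_sums coef_sums] by (intro sums_in_E[of "\<lambda>n. coef e n x + coef e n y"]) (simp add: scaleR_add_left)

lemma coef_add: "x \<in> closed_span e \<Longrightarrow> y \<in> closed_span e \<Longrightarrow> coef e n (x + y) = coef e n x + coef e n y"
  using sums_add[OF coef_sums coef_sums] by (intro coef_eq[of "\<lambda>n. coef e n x + coef e n y"]) (simp add: scaleR_add_left)

lemma E_scale: "x \<in> closed_span e \<Longrightarrow> c *\<^sub>R x \<in> closed_span e"
  using sums_scaleR_right[OF coef_sums, of x c] by (intro sums_in_E[of "\<lambda>n. c * coef e n x"]) simp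

lemma coef_scale: "x \<in> closed_span e \<Longrightarrow> coef e n (c *\<^sub>R x) = c * coef e n x"
  using sums_scaleR_right[OF coef_sums, of x c] by (intro coef_eq[of "\<lambda>n. c * coef e n x"]) simp

lemma fin_sums: "finite F \<Longrightarrow> (\<lambda>n. (if n \<in> F then c n else 0) *\<^sub>R e n) sums (\<Sum>k\<in>F. c k *\<^sub>R e k)"
  using sums_finite[of F "\<lambda>n. (if n \<in> F then c n else 0) *\<^sub>R e n"] by simp

lemma E_fin: "finite F \<Longrightarrow> (\<Sum>k\<in>F. c k *\<^sub>R e k) \<in> closed_span e"
  by (rule sums_in_E[OF fin_sums])

lemma coef_fin: "finite F \<Longrightarrow> coef e n (\<Sum>k\<in>F. c k *\<^sub>R e k) = (if n \<in> F then c n else 0)"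
  by (rule coef_eq[OF fin_sums])

lemma coef_zero: "coef e n 0 = 0"
  using coef_fin[of "{}" n] by simp

lemma coef_lim: assumes "x \<in> closed_span e" shows "(\<lambda>n. coef e n x) \<longlonglongrightarrow> 0"
proof -
  obtain c d where c: "0 < c" "\<And>n. c \<le> norm (e n)" using sn unfolding semi_normalized_def by blast
  have "(\<lambda>n. coef e n x *\<^sub>R e n) \<longlonglongrightarrow> 0"
    using coef_sums[OF assms] by (intro summable_LIMSEQ_zero) (rule sums_summable)
  hence lim: "(\<lambda>n. norm (coef e n x *\<^sub>R e n) / c) \<longlonglongrightarrow> 0"
    using tendsto_norm_zero tendsto_divide_zero by blast
  have b: "\<forall>n. norm (coef e n x) \<le> norm (coef e n x *\<^sub>R e n) / c"
  proof
    fix n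
    have "\<bar>coef e n x\<bar> * c \<le> \<bar>coef e n x\<bar> * norm (e n)" using c by (simp add: mult_left_mono)
    thus "norm (coef e n x) \<le> norm (coef e n x *\<^sub>R e n) / c" using c by (simp add: pos_le_divide_eq)
  qed
  show ?thesis by (rule Lim_null_comparison[OF always_eventually[OF b] lim])
qed

lemma coef_level_finite:
  assumes "x \<in> closed_span e" "\<epsilon> > 0" shows "finite {k. \<epsilon> \<le> \<bar>coef e k x\<bar>}"
proof -
  have "eventually (\<lambda>n. dist (coef e n x) 0 < \<epsilon>) sequentially"
    using coef_lim[OF assms(1)] assms(2) by (rule tendstoD)
  then obtain N where N: "\<And>n. n \<ge> N \<Longrightarrow> \<bar>coef e n x\<bar> < \<epsilon>"
    unfolding eventually_sequentially by auto
  have "{k. \<epsilon> \<le> \<bar>coef e k x\<bar>} \<subseteq> {..<N}" using N by (force simp: not_less[symmetric])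
  thus ?thesis by (rule finite_subset) simp
qed

lemma natord_nat: assumes "x \<in> closed_span e" shows "natgr (\<lambda>n. coef e n x) (natord e x)"
proof -
  have "\<exists>\<rho>. natgr (\<lambda>n. coef e n x) \<rho>" by (rule exists_natgr) (rule coef_level_finite[OF assms])
  hence "\<exists>\<rho>. natural_greedy_ordering e \<rho> x" by (simp add: natural_iff)
  hence "natural_greedy_ordering e (SOME \<rho>. natural_greedy_ordering e \<rho> x) x" by (rule someI_ex)
  thus ?thesis unfolding natord_def natural_iff .
qed

lemma natord_gr: "x \<in> closed_span e \<Longrightarrow> gr (\<lambda>n. coef e n x) (natord e x)"
  by (rule natgr_gr[OF natord_nat])

end


context bseq begin

lemma pert:
  assumes x: "x \<in> closed_span e" and g: "gr (\<lambda>n. coef e n x) \<pi>"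
  shows "\<exists>M. \<forall>t>0. \<exists>x'. x' \<in> closed_span e \<and> supp e x' = supp e x \<and> norm (x' - x) \<le> t * M \<and>
     (\<forall>n\<le>m. norm (G e \<pi> n x' - G e \<pi> n x) \<le> t * M) \<and>
     (\<forall>\<sigma>. gr (\<lambda>n. coef e n x') \<sigma> \<longrightarrow> (\<forall>n\<le>m. G e \<sigma> n x' = G e \<pi> n x') \<and> lattice_strictly_greedy e \<sigma> m x')"
proof -
  define a where "a = (\<lambda>n. coef e n x)"
  have ga: "gr a \<pi>" using g unfolding a_def .
  have injp: "inj \<pi>" using ga unfolding gr_def by auto
  define F where "F = \<pi> ` {..<m}"
  have finF: "finite F" unfolding F_def by simp
  define h where "h n = (if n \<in> F then real (m - inv \<pi> n) else 0)" for n
  have hpi: "h (\<pi> i) = real (m - i)" if "i < m" for i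
    using that injp unfolding h_def F_def by (auto simp: inv_f_f)
  have hout: "h n = 0" if "n \<notin> F" for n using that unfolding h_def by simp
  have hnn: "0 \<le> h n" for n unfolding h_def by simp
  define M1 where "M1 = (\<Sum>n\<in>F. \<bar>h n * a n\<bar> * norm (e n))"
  define M2 where "M2 = (\<Sum>i<m. \<bar>h (\<pi> i) * a (\<pi> i)\<bar> * norm (e (\<pi> i)))"
  have M1nn: "0 \<le> M1" and M2nn: "0 \<le> M2" unfolding M1_def M2_def by (auto intro: sum_nonneg)
  obtain p where p: "p \<le> m" "\<forall>j<p. a (\<pi> j) \<noteq> 0"
    "p < m \<longrightarrow> (\<forall>l\<ge>p. a (\<pi> l) = 0) \<and> {n. a n \<noteq> 0} \<subseteq> \<pi> ` {..<p}"
    using gr_first_zero[OF ga, of m] by blast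
  show ?thesis
  proof (intro exI[of _ "M1 + M2"] allI impI)
    fix t :: real assume t: "t > 0"
    define x' where "x' = x + (\<Sum>n\<in>F. (t * h n * a n) *\<^sub>R e n)"
    define b where "b n = a n * (1 + t * h n)" for n
    have x'E: "x' \<in> closed_span e" unfolding x'_def by (intro E_add x E_fin finF)
    have cx': "coef e n x' = b n" for n
    proof -
      have "coef e n x' = a n + (if n \<in> F then t * h n * a n else 0)"
        unfolding x'_def a_def by (simp add: coef_add[OF x E_fin[OF finF]] coef_fin[OF finF])
      also have "\<dots> = b n" unfolding b_def using hout[of n] by (auto simp: algebra_simps)
      finally show ?thesis .
    qed
    have cx'f: "(\<lambda>n. coef e n x') = b" using cx' by auto
    have pos: "0 < 1 + t * h n" for n using t hnn[of n] by (simp add: add_pos_nonneg)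
    have bz: "b n = 0 \<longleftrightarrow> a n = 0" for n unfolding b_def using pos[of n] by simp
    have suppeq: "supp e x' = supp e x" unfolding supp_def using bz cx' a_def by auto
    have d1: "norm (x' - x) \<le> t * (M1 + M2)"
    proof -
      have "norm (x' - x) = norm (\<Sum>n\<in>F. (t * h n * a n) *\<^sub>R e n)" unfolding x'_def by simp
      also have "\<dots> \<le> (\<Sum>n\<in>F. norm ((t * h n * a n) *\<^sub>R e n))" by (rule norm_sum)
      also have "\<dots> = t * M1" unfolding M1_def using t
        by (simp add: sum_distrib_left abs_mult mult.assoc)
      also have "\<dots> \<le> t * (M1 + M2)" using t M2nn by simp
      finally show ?thesis .
    qed
    have d2: "norm (G e \<pi> n x' - G e \<pi> n x) \<le> t * (M1 + M2)" if "n \<le> m" for n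
    proof -
      have "G e \<pi> n x' - G e \<pi> n x = (\<Sum>i<n. (b (\<pi> i) - a (\<pi> i)) *\<^sub>R e (\<pi> i))"
        unfolding G_def cx' a_def by (simp add: sum_subtractf scaleR_diff_left)
      also have "\<dots> = (\<Sum>i<n. (t * h (\<pi> i) * a (\<pi> i)) *\<^sub>R e (\<pi> i))"
        by (simp add: b_def algebra_simps)
      finally have "norm (G e \<pi> n x' - G e \<pi> n x) = norm (\<Sum>i<n. (t * h (\<pi> i) * a (\<pi> i)) *\<^sub>R e (\<pi> i))"
        by simp
      also have "\<dots> \<le> (\<Sum>i<n. norm ((t * h (\<pi> i) * a (\<pi> i)) *\<^sub>R e (\<pi> i)))" by (rule norm_sum)
      also have "\<dots> \<le> (\<Sum>i<m. norm ((t * h (\<pi> i) * a (\<pi> i)) *\<^sub>R e (\<pi> i)))"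
        by (rule sum_mono2) (use that in auto)
      also have "\<dots> = t * M2" unfolding M2_def using t
        by (simp add: sum_distrib_left abs_mult mult.assoc)
      also have "\<dots> \<le> t * (M1 + M2)" using t M1nn by simp
      finally show ?thesis .
    qed
    have absb: "\<bar>b n\<bar> = \<bar>a n\<bar> * (1 + t * h n)" for n
      unfolding b_def using pos[of n] by (simp add: abs_mult)
    have nz: "\<forall>j<p. b (\<pi> j) \<noteq> 0" using p(2) bz by auto
    have strict: "\<forall>i j. i < j \<longrightarrow> j < p \<longrightarrow> \<bar>b (\<pi> j)\<bar> < \<bar>b (\<pi> i)\<bar>"
    proof (intro allI impI)
      fix i j assume ij: "i < j" "j < p"
      have jm: "j < m" "i < m" using ij p(1) by auto
      have A: "\<bar>a (\<pi> j)\<bar> \<le> \<bar>a (\<pi> i)\<bar>" using gr_antimono[OF ga] ij by simp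
      have Apos: "0 < \<bar>a (\<pi> j)\<bar>" using p(2) ij by auto
      have "real (m - j) < real (m - i)" using ij jm by simp
      hence "1 + t * real (m - j) < 1 + t * real (m - i)" using t by simp
      hence "\<bar>a (\<pi> j)\<bar> * (1 + t * real (m - j)) < \<bar>a (\<pi> j)\<bar> * (1 + t * real (m - i))"
        using Apos by simp
      also have "\<dots> \<le> \<bar>a (\<pi> i)\<bar> * (1 + t * real (m - i))"
        by (rule mult_right_mono[OF A]) (use t in simp)
      finally show "\<bar>b (\<pi> j)\<bar> < \<bar>b (\<pi> i)\<bar>" using absb hpi jm by simp
    qed
    have out: "\<forall>n j. j < p \<longrightarrow> n \<notin> \<pi> ` {..<p} \<longrightarrow> \<bar>b n\<bar> < \<bar>b (\<pi> j)\<bar>"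
    proof (intro allI impI)
      fix n j assume j: "j < p" and n: "n \<notin> \<pi> ` {..<p}"
      have jm: "j < m" using j p(1) by simp
      have Apos: "0 < \<bar>a (\<pi> j)\<bar>" using p(2) j by auto
      have "1 < 1 + t * real (m - j)" using t jm by simp
      hence "\<bar>a (\<pi> j)\<bar> * 1 < \<bar>a (\<pi> j)\<bar> * (1 + t * real (m - j))"
        by (rule mult_strict_left_mono[OF _ Apos])
      hence bj: "\<bar>a (\<pi> j)\<bar> < \<bar>b (\<pi> j)\<bar>" using absb[of "\<pi> j"] hpi[OF jm] by simp
      show "\<bar>b n\<bar> < \<bar>b (\<pi> j)\<bar>"
      proof (cases "a n = 0")
        case True then show ?thesis using bz[of n] nz j by auto
      next
        case False
        then obtain q where q: "n = \<pi> q" using ga unfolding gr_def by auto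
        have qp: "q \<ge> p" using n q by (metis image_eqI lessThan_iff not_le)
        show ?thesis
        proof (cases "q < m")
          case True
          then have "p < m" using qp by simp
          then have "a n = 0" using p(3) q qp by auto
          then show ?thesis using False by simp
        next
          case qm: False
          have "n \<notin> F"
          proof
            assume "n \<in> F"
            then obtain r where "r < m" "n = \<pi> r" unfolding F_def by auto
            hence "r = q" using q injp by (auto dest: injD)
            thus False using qm \<open>r < m\<close> by simp
          qed
          hence "\<bar>b n\<bar> = \<bar>a n\<bar>" using absb hout by simp
          also have "\<dots> \<le> \<bar>a (\<pi> j)\<bar>" using gr_antimono[OF ga, of j q] q qm jm by simp
          also have "\<dots> < \<bar>b (\<pi> j)\<bar>" by (rule bj)
          finally show ?thesis .
        qed
      qed
    qed
    have main: "(\<forall>n\<le>m. G e \<sigma> n x' = G e \<pi> n x') \<and> lattice_strictly_greedy e \<sigma> m x'"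
      if gs: "gr (\<lambda>n. coef e n x') \<sigma>" for \<sigma>
    proof -
      have gb: "gr b \<sigma>" using gs cx'f by simp
      have injs: "inj \<sigma>" using gb unfolding gr_def by auto
      have same: "\<forall>j<p. \<sigma> j = \<pi> j" by (rule top_unique[OF gb injp nz strict out])
      have zs: "b (\<sigma> i) = 0" if "p \<le> i" "p < m" for i
      proof (rule ccontr)
        assume "b (\<sigma> i) \<noteq> 0"
        hence "a (\<sigma> i) \<noteq> 0" using bz by simp
        hence "\<sigma> i \<in> \<pi> ` {..<p}" using p(3) that(2) by auto
        then obtain q where q: "q < p" "\<sigma> i = \<pi> q" by auto
        hence "\<sigma> i = \<sigma> q" using same by simp
        hence "i = q" using injs by (auto dest: injD)
        thus False using q(1) that(1) by simp
      qed
      have zp: "b (\<pi> i) = 0" if "p \<le> i" "p < m" for i using p(3) that bz by auto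
      have Geq: "G e \<sigma> n x' = G e \<pi> n x'" if "n \<le> m" for n
        unfolding G_def cx'
      proof (rule sum.cong[OF refl])
        fix i assume i: "i \<in> {..<n}"
        show "b (\<sigma> i) *\<^sub>R e (\<sigma> i) = b (\<pi> i) *\<^sub>R e (\<pi> i)"
        proof (cases "i < p")
          case True thus ?thesis using same by simp
        next
          case False
          hence "p < m" using i that by auto
          thus ?thesis using zs zp False by simp
        qed
      qed
      have "lattice_strictly_greedy e \<sigma> m x'"
        unfolding lattice_strictly_greedy_def cx'
      proof (intro allI impI)
        fix i j assume im: "i < m" and jm: "j < m" and ij: "i \<noteq> j \<and> b (\<sigma> i) \<noteq> 0"
        have ip: "i < p"
        proof (rule ccontr)
          assume "\<not> i < p"
          hence "p \<le> i" "p < m" using im by auto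
          thus False using zs ij by blast
        qed
        show "\<bar>b (\<sigma> i)\<bar> \<noteq> \<bar>b (\<sigma> j)\<bar>"
        proof (cases "j < p")
          case True
          hence e2: "\<sigma> i = \<pi> i" "\<sigma> j = \<pi> j" using same ip by auto
          consider "i < j" | "j < i" using ij by arith
          then show ?thesis
          proof cases
            case 1 then show ?thesis using strict True e2 by fastforce
          next
            case 2 then show ?thesis using strict ip e2 by fastforce
          qed
        next
          case False
          hence "b (\<sigma> j) = 0" using zs jm by simp
          thus ?thesis using ij by simp
        qed
      qed
      thus ?thesis using Geq by simp
    qed
    show "\<exists>x'. x' \<in> closed_span e \<and> supp e x' = supp e x \<and> norm (x' - x) \<le> t * (M1 + M2) \<and>
     (\<forall>n\<le>m. norm (G e \<pi> n x' - G e \<pi> n x) \<le> t * (M1 + M2)) \<and>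
     (\<forall>\<sigma>. gr (\<lambda>n. coef e n x') \<sigma> \<longrightarrow> (\<forall>n\<le>m. G e \<sigma> n x' = G e \<pi> n x') \<and> lattice_strictly_greedy e \<sigma> m x')"
      using x'E suppeq d1 d2 main by blast
  qed
qed

lemma pert_bound:
  assumes x: "x \<in> closed_span e" and g: "gr (\<lambda>n. coef e n x) \<pi>" and C: "0 \<le> C"
    and H: "\<And>x'. x' \<in> closed_span e \<Longrightarrow> supp e x' = supp e x \<Longrightarrow>
       (\<forall>\<sigma>. gr (\<lambda>n. coef e n x') \<sigma> \<longrightarrow> (\<forall>n\<le>m. G e \<sigma> n x' = G e \<pi> n x') \<and> lattice_strictly_greedy e \<sigma> m x')
       \<Longrightarrow> norm (NGvee e m x') \<le> C * norm x'"
  shows "norm (Gvee e \<pi> m x) \<le> C * norm x"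
proof -
  obtain M where M: "\<forall>t>0. \<exists>x'. x' \<in> closed_span e \<and> supp e x' = supp e x \<and> norm (x' - x) \<le> t * M \<and>
     (\<forall>n\<le>m. norm (G e \<pi> n x' - G e \<pi> n x) \<le> t * M) \<and>
     (\<forall>\<sigma>. gr (\<lambda>n. coef e n x') \<sigma> \<longrightarrow> (\<forall>n\<le>m. G e \<sigma> n x' = G e \<pi> n x') \<and> lattice_strictly_greedy e \<sigma> m x')"
    using pert[OF x g, of m] by blast
  show ?thesis
  proof (rule eps_le[where K = "C * M + real m * M"])
    fix t :: real assume t: "t > 0"
    obtain x' where x': "x' \<in> closed_span e" "supp e x' = supp e x" "norm (x' - x) \<le> t * M"
      "\<forall>n\<le>m. norm (G e \<pi> n x' - G e \<pi> n x) \<le> t * M"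
      "\<forall>\<sigma>. gr (\<lambda>n. coef e n x') \<sigma> \<longrightarrow> (\<forall>n\<le>m. G e \<sigma> n x' = G e \<pi> n x') \<and> lattice_strictly_greedy e \<sigma> m x'"
      using M t by blast
    have gs: "gr (\<lambda>n. coef e n x') (natord e x')" by (rule natord_gr[OF x'(1)])
    have NG: "NGvee e m x' = Gvee e \<pi> m x'"
      unfolding NGvee_def by (rule Gvee_cong) (use x'(5) gs in auto)
    have b1: "norm (Gvee e \<pi> m x') \<le> C * norm x'" using H[OF x'(1,2)] x'(5) NG by simp
    have "norm (Gvee e \<pi> m x - Gvee e \<pi> m x') \<le> (\<Sum>n<m. norm (G e \<pi> (Suc n) x - G e \<pi> (Suc n) x'))"
      by (rule Gvee_diff)
    also have "\<dots> \<le> (\<Sum>n<m. t * M)"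
    proof (rule sum_mono)
      fix n assume "n \<in> {..<m}"
      hence "Suc n \<le> m" by simp
      thus "norm (G e \<pi> (Suc n) x - G e \<pi> (Suc n) x') \<le> t * M"
        using x'(4) by (simp add: norm_minus_commute)
    qed
    also have "\<dots> = real m * (t * M)" by simp
    finally have b2: "norm (Gvee e \<pi> m x - Gvee e \<pi> m x') \<le> real m * (t * M)" .
    have nx': "norm x' \<le> norm x + t * M" using norm_triangle_ineq[of x "x' - x"] x'(3) by simp
    have "norm (Gvee e \<pi> m x) \<le> norm (Gvee e \<pi> m x') + norm (Gvee e \<pi> m x - Gvee e \<pi> m x')"
      using norm_triangle_ineq[of "Gvee e \<pi> m x'" "Gvee e \<pi> m x - Gvee e \<pi> m x'"] by simp
    also have "\<dots> \<le> C * norm x' + real m * (t * M)" using b1 b2 by simp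
    also have "\<dots> \<le> C * (norm x + t * M) + real m * (t * M)" using nx' C by (simp add: mult_left_mono)
    also have "\<dots> = C * norm x + t * (C * M + real m * M)" by (simp add: algebra_simps)
    finally show "norm (Gvee e \<pi> m x) \<le> C * norm x + t * (C * M + real m * M)" .
  qed
qed

end


context bseq begin

lemma ii_i:
  assumes H2: "\<forall>x\<in>closed_span e. \<forall>m. norm (NGvee e m x) \<le> C * norm x" and C: "0 \<le> C"
    and x: "x \<in> closed_span e" and g: "greedy_ordering e \<pi> x"
  shows "norm (Gvee e \<pi> m x) \<le> C * norm x"
  by (rule pert_bound[OF x g[unfolded greedy_iff] C]) (use H2 in blast)

lemma iv_v:
  assumes H4: "\<forall>x\<in>closed_span e. finite (supp e x) \<and> lattice_strictly_greedy e (natord e x) (card (supp e x)) x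
       \<longrightarrow> norm (NGvee e (card (supp e x)) x) \<le> C * norm x"
    and C: "0 \<le> C" and x: "x \<in> closed_span e" and fin: "finite (supp e x)"
  shows "norm (NGvee e (card (supp e x)) x) \<le> C * norm x"
  unfolding NGvee_def
proof (rule pert_bound[OF x natord_gr[OF x] C])
  fix x' assume x': "x' \<in> closed_span e" "supp e x' = supp e x"
    and hs: "\<forall>\<sigma>. gr (\<lambda>n. coef e n x') \<sigma> \<longrightarrow> (\<forall>n\<le>card (supp e x). G e \<sigma> n x' = G e (natord e x) n x') \<and>
       lattice_strictly_greedy e \<sigma> (card (supp e x)) x'"
  have lsg: "lattice_strictly_greedy e (natord e x') (card (supp e x')) x'"
    using hs natord_gr[OF x'(1)] x'(2) by simp
  have fx': "finite (supp e x')" using fin x'(2) by simp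
  have "norm (NGvee e (card (supp e x')) x') \<le> C * norm x'" using H4 x'(1) fx' lsg by blast
  thus "norm (NGvee e (card (supp e x)) x') \<le> C * norm x'" using x'(2) by simp
qed

lemma iii_iv:
  assumes H3: "\<forall>x\<in>closed_span e. \<forall>m. \<exists>\<pi>. greedy_ordering e \<pi> x \<and> norm (Gvee e \<pi> m x) \<le> C * norm x"
    and x: "x \<in> closed_span e" and fin: "finite (supp e x)"
    and st: "lattice_strictly_greedy e (natord e x) (card (supp e x)) x"
  shows "norm (NGvee e (card (supp e x)) x) \<le> C * norm x"
proof -
  define k where "k = card (supp e x)"
  define a where "a = (\<lambda>n. coef e n x)"
  define \<rho> where "\<rho> = natord e x"
  obtain \<pi> where \<pi>: "greedy_ordering e \<pi> x" "norm (Gvee e \<pi> k x) \<le> C * norm x" using H3 x by blast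
  have gp: "gr a \<pi>" using \<pi>(1) unfolding greedy_iff a_def .
  have gr: "gr a \<rho>" unfolding a_def \<rho>_def by (rule natord_gr[OF x])
  have sa: "supp e x = {n. a n \<noteq> 0}" unfolding supp_def a_def by simp
  have finA: "finite {n. a n \<noteq> 0}" using fin sa by simp
  have kk: "k = card {n. a n \<noteq> 0}" using k_def sa by simp
  have pre: "\<rho> i \<in> {n. a n \<noteq> 0} \<longleftrightarrow> i < k" for i using finite_prefix[OF gr finA] kk by simp
  have injr: "inj \<rho>" using gr unfolding gr_def by auto
  have nz: "\<forall>j<k. a (\<rho> j) \<noteq> 0" using pre by auto
  have st': "\<bar>a (\<rho> i)\<bar> \<noteq> \<bar>a (\<rho> j)\<bar>" if "i < k" "j < k" "i \<noteq> j" "a (\<rho> i) \<noteq> 0" for i j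
    using st that unfolding lattice_strictly_greedy_def \<rho>_def a_def k_def by blast
  have strict: "\<forall>i j. i < j \<longrightarrow> j < k \<longrightarrow> \<bar>a (\<rho> j)\<bar> < \<bar>a (\<rho> i)\<bar>"
  proof (intro allI impI)
    fix i j assume ij: "i < j" "j < k"
    have "\<bar>a (\<rho> j)\<bar> \<le> \<bar>a (\<rho> i)\<bar>" using gr_antimono[OF gr] ij by simp
    moreover have "\<bar>a (\<rho> i)\<bar> \<noteq> \<bar>a (\<rho> j)\<bar>" using st'[of i j] ij nz by simp
    ultimately show "\<bar>a (\<rho> j)\<bar> < \<bar>a (\<rho> i)\<bar>" by simp
  qed
  have out: "\<forall>n j. j < k \<longrightarrow> n \<notin> \<rho> ` {..<k} \<longrightarrow> \<bar>a n\<bar> < \<bar>a (\<rho> j)\<bar>"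
  proof (intro allI impI)
    fix n j assume j: "j < k" and n: "n \<notin> \<rho> ` {..<k}"
    have "a n = 0"
    proof (rule ccontr)
      assume an: "a n \<noteq> 0"
      then obtain q where q: "n = \<rho> q" using gr unfolding gr_def by auto
      hence "q < k" using pre an by auto
      thus False using n q by auto
    qed
    thus "\<bar>a n\<bar> < \<bar>a (\<rho> j)\<bar>" using nz j by simp
  qed
  have same: "\<forall>j<k. \<pi> j = \<rho> j" by (rule top_unique[OF gp injr nz strict out])
  have "Gvee e \<pi> k x = Gvee e \<rho> k x"
  proof (rule Gvee_cong)
    fix n assume "n \<le> k"
    thus "G e \<pi> n x = G e \<rho> n x" unfolding G_def using same by (intro sum.cong) auto
  qed
  thus ?thesis using \<pi>(2) unfolding NGvee_def \<rho>_def k_def by simp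
qed

lemma v_ii:
  assumes H5: "\<forall>x\<in>closed_span e. finite (supp e x) \<longrightarrow> norm (NGvee e (card (supp e x)) x) \<le> C * norm x"
    and x: "x \<in> closed_span e"
  shows "norm (NGvee e m x) \<le> C * norm x"
proof -
  define a where "a = (\<lambda>n. coef e n x)"
  define \<rho> where "\<rho> = natord e x"
  have na: "natgr a \<rho>" unfolding a_def \<rho>_def by (rule natord_nat[OF x])
  have ga: "gr a \<rho>" using na by (rule natgr_gr)
  obtain p where p: "p \<le> m" "\<forall>j<p. a (\<rho> j) \<noteq> 0"
    "p < m \<longrightarrow> (\<forall>l\<ge>p. a (\<rho> l) = 0) \<and> {n. a n \<noteq> 0} \<subseteq> \<rho> ` {..<p}"
    using gr_first_zero[OF ga, of m] by blast
  define N0 where "N0 = Suc (\<Sum>i<m. \<rho> i)"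
  have N0: "\<rho> i < N0" if "i < m" for i
  proof -
    have "\<rho> i \<le> (\<Sum>i<m. \<rho> i)" by (rule member_le_sum) (use that in auto)
    thus ?thesis unfolding N0_def by simp
  qed
  define y where "y = (\<lambda>N. \<Sum>k<N. a k *\<^sub>R e k)"
  have bound: "norm (NGvee e m x) \<le> C * norm (y N)" if N: "N \<ge> N0" for N
  proof -
    have yE: "y N \<in> closed_span e" unfolding y_def by (rule E_fin) simp
    define b where "b = (\<lambda>n. coef e n (y N))"
    have bform: "b n = (if n < N then a n else 0)" for n unfolding b_def y_def by (simp add: coef_fin)
    define \<sigma> where "\<sigma> = natord e (y N)"
    have nb: "natgr b \<sigma>" unfolding \<sigma>_def b_def by (rule natord_nat[OF yE])
    have gb: "gr b \<sigma>" using nb by (rule natgr_gr)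
    have injs: "inj \<sigma>" using gb unfolding gr_def by auto
    have bsub: "\<forall>n. b n \<noteq> 0 \<longrightarrow> b n = a n" using bform by auto
    have pre: "\<forall>j<p. a (\<rho> j) \<noteq> 0 \<and> b (\<rho> j) = a (\<rho> j)"
    proof (intro allI impI conjI)
      fix j assume j: "j < p"
      show "a (\<rho> j) \<noteq> 0" using p(2) j by simp
      have "\<rho> j < N" using N0[of j] j p(1) N by simp
      thus "b (\<rho> j) = a (\<rho> j)" using bform by simp
    qed
    have same: "\<forall>j<p. \<sigma> j = \<rho> j" by (rule nat_prefix[OF na nb bsub pre])
    have zs: "b (\<sigma> i) = 0" if "p \<le> i" "p < m" for i
    proof (rule ccontr)
      assume "b (\<sigma> i) \<noteq> 0"
      hence "a (\<sigma> i) \<noteq> 0" using bsub by metis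
      hence "\<sigma> i \<in> \<rho> ` {..<p}" using p(3) that(2) by auto
      then obtain q where q: "q < p" "\<sigma> i = \<rho> q" by auto
      hence "\<sigma> i = \<sigma> q" using same by simp
      hence "i = q" using injs by (auto dest: injD)
      thus False using q(1) that(1) by simp
    qed
    have zp: "a (\<rho> i) = 0" if "p \<le> i" "p < m" for i using p(3) that by auto
    have Geq: "G e \<rho> n x = G e \<sigma> n (y N)" if "n \<le> m" for n
      unfolding G_def
    proof (rule sum.cong[OF refl])
      fix i assume i: "i \<in> {..<n}"
      show "coef e (\<rho> i) x *\<^sub>R e (\<rho> i) = coef e (\<sigma> i) (y N) *\<^sub>R e (\<sigma> i)"
      proof (cases "i < p")
        case True
        hence "\<sigma> i = \<rho> i" using same by simp
        moreover have "b (\<rho> i) = a (\<rho> i)" using pre True by simp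
        ultimately show ?thesis unfolding b_def a_def by simp
      next
        case False
        hence "p < m" using i that by auto
        thus ?thesis using zs[of i] zp[of i] False unfolding b_def a_def by simp
      qed
    qed
    have NGeq: "NGvee e m x = Gvee e \<sigma> m (y N)"
      unfolding NGvee_def \<rho>_def[symmetric] by (rule Gvee_cong) (rule Geq)
    define k where "k = card (supp e (y N))"
    have sy: "supp e (y N) = {n. b n \<noteq> 0}" unfolding supp_def b_def by simp
    have "{n. b n \<noteq> 0} \<subseteq> {..<N}" using bform by auto
    hence finy: "finite (supp e (y N))" using sy finite_subset by auto
    have kpre: "\<sigma> i \<in> {n. b n \<noteq> 0} \<longleftrightarrow> i < k" for i
      using finite_prefix[OF gb] finy sy k_def by simp
    have Gk: "G e \<sigma> n (y N) = G e \<sigma> k (y N)" if "k \<le> n" for n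
      using that
    proof (induction n rule: dec_induct)
      case base then show ?case by simp
    next
      case (step n)
      have "b (\<sigma> n) = 0" using kpre[of n] step(1) by simp
      hence "G e \<sigma> (Suc n) (y N) = G e \<sigma> n (y N)" unfolding G_def b_def by simp
      then show ?case using step by simp
    qed
    have "norm (NGvee e m x) = norm (Gvee e \<sigma> m (y N))" using NGeq by simp
    also have "\<dots> \<le> norm (Gvee e \<sigma> (max m k) (y N))" by (rule norm_Gvee_mono) simp
    also have "Gvee e \<sigma> (max m k) (y N) = Gvee e \<sigma> k (y N)" by (rule Gvee_const[OF Gk]) simp_all
    also have "norm (Gvee e \<sigma> k (y N)) \<le> C * norm (y N)"
      using H5 yE finy unfolding NGvee_def \<sigma>_def k_def by simp
    finally show ?thesis .
  qed
  have ly: "y \<longlonglongrightarrow> x" using coef_sums[OF x] unfolding sums_def y_def a_def .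
  have lim: "(\<lambda>N. C * norm (y N)) \<longlonglongrightarrow> C * norm x"
    by (rule tendsto_mult_left, rule tendsto_norm) (rule ly)
  show ?thesis
    by (rule LIMSEQ_le_const[OF lim]) (use bound in blast)
qed

lemma zero_E: "0 \<in> closed_span e"
  using E_fin[of "{}"] by simp

lemma NGvee_scale:
  assumes x: "x \<in> closed_span e" shows "NGvee e m (c *\<^sub>R x) = \<bar>c\<bar> *\<^sub>R NGvee e m x"
proof (cases "c = 0")
  case True
  have "NGvee e m (c *\<^sub>R x) = Gvee e (natord e 0) m 0" using True unfolding NGvee_def by simp
  also have "\<dots> = \<bar>0\<bar> *\<^sub>R Gvee e (natord e 0) m x" by (rule Gvee_scale) (simp add: G_def coef_zero)
  finally show ?thesis using True by simp
next
  case False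
  have "(\<lambda>\<rho>. natural_greedy_ordering e \<rho> (c *\<^sub>R x)) = (\<lambda>\<rho>. natural_greedy_ordering e \<rho> x)"
    unfolding natural_iff coef_scale[OF x] using natgr_scale[OF False, of "\<lambda>n. coef e n x"] by simp
  hence nat: "natord e (c *\<^sub>R x) = natord e x" unfolding natord_def by simp
  have "Gvee e (natord e x) m (c *\<^sub>R x) = \<bar>c\<bar> *\<^sub>R Gvee e (natord e x) m x"
    by (rule Gvee_scale) (simp add: G_def coef_scale[OF x] scaleR_sum_right)
  thus ?thesis unfolding NGvee_def nat .
qed

lemma NGvee_zero: "NGvee e m 0 = 0"
  using NGvee_scale[OF zero_E, of m 0] by simp

lemma opnorm:
  "(\<forall>x\<in>closed_span e. \<forall>m. norm (NGvee e m x) \<le> C' * norm x) \<longleftrightarrow> (SUP m. NGvee_norm e m) \<le> ereal C'"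
proof
  assume H: "\<forall>x\<in>closed_span e. \<forall>m. norm (NGvee e m x) \<le> C' * norm x"
  show "(SUP m. NGvee_norm e m) \<le> ereal C'"
  proof (rule SUP_least)
    fix m show "NGvee_norm e m \<le> ereal C'" unfolding NGvee_norm_def
    proof (rule SUP_least)
      fix x assume "x \<in> {x \<in> closed_span e. norm x = 1}"
      thus "ereal (norm (NGvee e m x)) \<le> ereal C'" using H by force
    qed
  qed
next
  assume S: "(SUP m. NGvee_norm e m) \<le> ereal C'"
  show "\<forall>x\<in>closed_span e. \<forall>m. norm (NGvee e m x) \<le> C' * norm x"
  proof (intro ballI allI)
    fix x m assume x: "x \<in> closed_span e"
    show "norm (NGvee e m x) \<le> C' * norm x"
    proof (cases "x = 0")
      case True then show ?thesis using NGvee_zero by simp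
    next
      case False
      define u where "u = (1 / norm x) *\<^sub>R x"
      have uE: "u \<in> closed_span e" unfolding u_def by (rule E_scale[OF x])
      have nu: "norm u = 1" unfolding u_def using False by simp
      have "ereal (norm (NGvee e m u)) \<le> NGvee_norm e m" unfolding NGvee_norm_def
        by (rule SUP_upper) (use uE nu in simp)
      also have "\<dots> \<le> (SUP m. NGvee_norm e m)" by (rule SUP_upper) simp
      also have "\<dots> \<le> ereal C'" by (rule S)
      finally have bu: "norm (NGvee e m u) \<le> C'" by simp
      have xu: "norm x *\<^sub>R u = x" unfolding u_def using False by simp
      have "NGvee e m x = \<bar>norm x\<bar> *\<^sub>R NGvee e m u" using NGvee_scale[OF uE, of m "norm x"] xu by simp
      hence "norm (NGvee e m x) = norm x * norm (NGvee e m u)" by simp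
      also have "\<dots> \<le> norm x * C'" using bu by (simp add: mult_left_mono)
      finally show ?thesis by (simp add: mult.commute)
    qed
  qed
qed

lemma sup_ge_one: "ereal 1 \<le> (SUP m. NGvee_norm e m)"
proof -
  obtain c d where c: "0 < c" "\<And>n. c \<le> norm (e n)" using sn unfolding semi_normalized_def by blast
  have ne: "0 < norm (e 0)" by (rule less_le_trans[OF c(1) c(2)])
  define u where "u = (\<Sum>k\<in>{0::nat}. (1 / norm (e 0)) *\<^sub>R e k)"
  have uE: "u \<in> closed_span e" unfolding u_def by (rule E_fin) simp
  have cu: "coef e n u = (if n = 0 then 1 / norm (e 0) else 0)" for n
    using coef_fin[of "{0}" n "\<lambda>_. 1 / norm (e 0)"] unfolding u_def by simp
  have u': "u = (1 / norm (e 0)) *\<^sub>R e 0" unfolding u_def by simp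
  have nu: "norm u = 1" unfolding u' using ne by simp
  define \<rho> where "\<rho> = natord e u"
  have g: "gr (\<lambda>n. coef e n u) \<rho>" unfolding \<rho>_def by (rule natord_gr[OF uE])
  have "0 \<in> range \<rho>" using g ne unfolding gr_def by (auto simp: cu)
  then obtain l where l: "\<rho> l = 0" by auto
  have "\<bar>coef e (\<rho> l) u\<bar> \<le> \<bar>coef e (\<rho> 0) u\<bar>" by (rule gr_antimono[OF g]) simp
  hence r0: "\<rho> 0 = 0" using l ne by (auto simp: cu split: if_splits)
  have c0: "coef e 0 u = 1 / norm (e 0)" using cu[of 0] by simp
  have "G e \<rho> 1 u = coef e 0 u *\<^sub>R e 0" unfolding G_def using r0 by simp
  also have "\<dots> = u" using c0 u' by simp
  finally have G1: "G e \<rho> 1 u = u" .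
  have "NGvee e 1 u = sup 0 (labs u)" unfolding NGvee_def \<rho>_def[symmetric] using G1 by simp
  hence "norm (labs u) \<le> norm (NGvee e 1 u)" by (simp add: norm_mono_pos labs_nonneg)
  hence n1: "1 \<le> norm (NGvee e 1 u)" using nu by (simp add: norm_labs)
  have "ereal 1 \<le> ereal (norm (NGvee e 1 u))" using n1 by simp
  also have "\<dots> \<le> NGvee_norm e 1" unfolding NGvee_norm_def by (rule SUP_upper) (use uE nu in simp)
  also have "\<dots> \<le> (SUP m. NGvee_norm e m)" by (rule SUP_upper) simp
  finally show ?thesis .
qed

end

theorem lemma3p1:
  fixes e :: "nat \<Rightarrow> 'a::banach_lattice" and C :: real
  assumes "basic_sequence e" and "semi_normalized e" and "C > 0"
  shows "((\<forall>x\<in>closed_span e. \<forall>m. \<forall>\<pi>. greedy_ordering e \<pi> x \<longrightarrow>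
              norm (Gvee e \<pi> m x) \<le> C * norm x)
       \<longleftrightarrow> (\<forall>x\<in>closed_span e. \<forall>m. norm (NGvee e m x) \<le> C * norm x))
   \<and> ((\<forall>x\<in>closed_span e. \<forall>m. norm (NGvee e m x) \<le> C * norm x)
       \<longleftrightarrow> (\<forall>x\<in>closed_span e. \<forall>m. \<exists>\<pi>. greedy_ordering e \<pi> x \<and>
              norm (Gvee e \<pi> m x) \<le> C * norm x))
   \<and> ((\<forall>x\<in>closed_span e. \<forall>m. norm (NGvee e m x) \<le> C * norm x)
       \<longleftrightarrow> (\<forall>x\<in>closed_span e. finite (supp e x) \<and>
              lattice_strictly_greedy e (natord e x) (card (supp e x)) x \<longrightarrow>
              norm (NGvee e (card (supp e x)) x) \<le> C * norm x))
   \<and> ((\<forall>x\<in>closed_span e. \<forall>m. norm (NGvee e m x) \<le> C * norm x)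
       \<longleftrightarrow> (\<forall>x\<in>closed_span e. finite (supp e x) \<longrightarrow>
              norm (NGvee e (card (supp e x)) x) \<le> C * norm x))
   \<and> (\<forall>C'>0. (\<forall>x\<in>closed_span e. \<forall>m. norm (NGvee e m x) \<le> C' * norm x)
              \<longleftrightarrow> (SUP m. NGvee_norm e m) \<le> ereal C')
   \<and> ((SUP m. NGvee_norm e m) \<noteq> \<infinity> \<longrightarrow>
       (let K = real_of_ereal (SUP m. NGvee_norm e m);
            Cs = {C'. C' > 0 \<and> (\<forall>x\<in>closed_span e. \<forall>m. norm (NGvee e m x) \<le> C' * norm x)}
        in K \<in> Cs \<and> (\<forall>C'\<in>Cs. K \<le> C')))"
proof -
  interpret bseq e using assms(1,2) by unfold_locales
  have C0: "0 \<le> C" using assms(3) by simp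
  define P1 where "P1 = (\<forall>x\<in>closed_span e. \<forall>m. \<forall>\<pi>. greedy_ordering e \<pi> x \<longrightarrow>
              norm (Gvee e \<pi> m x) \<le> C * norm x)"
  define P2 where "P2 = (\<forall>x\<in>closed_span e. \<forall>m. norm (NGvee e m x) \<le> C * norm x)"
  define P3 where "P3 = (\<forall>x\<in>closed_span e. \<forall>m. \<exists>\<pi>. greedy_ordering e \<pi> x \<and>
              norm (Gvee e \<pi> m x) \<le> C * norm x)"
  define P4 where "P4 = (\<forall>x\<in>closed_span e. finite (supp e x) \<and>
              lattice_strictly_greedy e (natord e x) (card (supp e x)) x \<longrightarrow>
              norm (NGvee e (card (supp e x)) x) \<le> C * norm x)"
  define P5 where "P5 = (\<forall>x\<in>closed_span e. finite (supp e x) \<longrightarrow>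
              norm (NGvee e (card (supp e x)) x) \<le> C * norm x)"
  have ng: "greedy_ordering e (natord e x) x" if "x \<in> closed_span e" for x
    unfolding greedy_iff by (rule natord_gr[OF that])
  have 12: "P1 \<Longrightarrow> P2" unfolding P1_def P2_def NGvee_def using ng by blast
  have 21: "P2 \<Longrightarrow> P1" unfolding P1_def P2_def using ii_i[OF _ C0] by blast
  have 23: "P2 \<Longrightarrow> P3" unfolding P3_def P2_def NGvee_def using ng by blast
  have 34: "P3 \<Longrightarrow> P4" unfolding P3_def P4_def using iii_iv by blast
  have 45: "P4 \<Longrightarrow> P5" unfolding P4_def P5_def using iv_v[OF _ C0] by blast
  have 52: "P5 \<Longrightarrow> P2" unfolding P5_def P2_def using v_ii by blast
  have 24: "P2 \<Longrightarrow> P4" unfolding P2_def P4_def by blast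
  have 25: "P2 \<Longrightarrow> P5" unfolding P2_def P5_def by blast
  have c5: "\<forall>C'>0. (\<forall>x\<in>closed_span e. \<forall>m. norm (NGvee e m x) \<le> C' * norm x)
              \<longleftrightarrow> (SUP m. NGvee_norm e m) \<le> ereal C'"
    using opnorm by blast
  have c6: "(SUP m. NGvee_norm e m) \<noteq> \<infinity> \<longrightarrow>
       (let K = real_of_ereal (SUP m. NGvee_norm e m);
            Cs = {C'. C' > 0 \<and> (\<forall>x\<in>closed_span e. \<forall>m. norm (NGvee e m x) \<le> C' * norm x)}
        in K \<in> Cs \<and> (\<forall>C'\<in>Cs. K \<le> C'))"
  proof
    assume ni: "(SUP m. NGvee_norm e m) \<noteq> \<infinity>"
    define S where "S = (SUP m. NGvee_norm e m)"
    have S1: "ereal 1 \<le> S" unfolding S_def by (rule sup_ge_one)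
    obtain K where K: "S = ereal K" using ni S1 unfolding S_def[symmetric] by (cases S) auto
    have K1: "1 \<le> K" using S1 K by simp
    have rK: "real_of_ereal S = K" using K by simp
    have inCs: "K > 0 \<and> (\<forall>x\<in>closed_span e. \<forall>m. norm (NGvee e m x) \<le> K * norm x)"
      using K1 opnorm[of K] K unfolding S_def by simp
    have minC: "K \<le> C'" if "C' > 0 \<and> (\<forall>x\<in>closed_span e. \<forall>m. norm (NGvee e m x) \<le> C' * norm x)" for C'
      using that opnorm[of C'] K unfolding S_def by simp
    show "let K = real_of_ereal (SUP m. NGvee_norm e m);
            Cs = {C'. C' > 0 \<and> (\<forall>x\<in>closed_span e. \<forall>m. norm (NGvee e m x) \<le> C' * norm x)}
        in K \<in> Cs \<and> (\<forall>C'\<in>Cs. K \<le> C')"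
      unfolding Let_def S_def[symmetric] rK using inCs minC by blast
  qed
  show ?thesis
    unfolding P1_def[symmetric] P2_def[symmetric] P3_def[symmetric] P4_def[symmetric] P5_def[symmetric]
    using 12 21 23 34 45 52 24 25 c5 c6 by blast
qed

end
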